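(* Let $a\in \mathcal{A}$. Then the following are equivalent: (1) $a$ has a $w$-weighted core inverse. (2) $aw\in \mathcal{A}^{\#}$ and there exists $x\in \mathcal{A}$ such that $xw(aw)^2=aw$, $(wawx)^*=wawx$. (3) $aw\in \mathcal{A}^{\#}$ and there exists $x\in \mathcal{A}$ such that $xw(aw)=aw(aw)^{\#}$, $(wawx)^*=wawx$.
   Context: $\mathcal{A}$ is a complex Banach *-algebra with identity and $w\in\mathcal{A}$. $a$ has a $w$-weighted core inverse if there is $x$ with $a(wx)^2=x$, $(wawx)^*=wawx$, $xw(aw)^2=aw$. $\mathcal{A}^{\#}$ is the set of group invertible elements, $b^{\#}$ the group inverse. *)

theory Defs
  imports "HOL-Analysis.Analysis"
begin

class banach_star_algebra = real_normed_algebra_1 + banach +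
  fixes scaleC :: "complex \<Rightarrow> 'a \<Rightarrow> 'a"
    and star :: "'a \<Rightarrow> 'a"
  assumes scaleC_of_real: "scaleC (complex_of_real r) x = scaleR r x"
    and scaleC_add_right: "scaleC c (x + y) = scaleC c x + scaleC c y"
    and scaleC_add_left: "scaleC (c + d) x = scaleC c x + scaleC d x"
    and scaleC_scaleC: "scaleC c (scaleC d x) = scaleC (c * d) x"
    and scaleC_one: "scaleC 1 x = x"
    and scaleC_left_mult: "scaleC c x * y = scaleC c (x * y)"
    and scaleC_right_mult: "x * scaleC c y = scaleC c (x * y)"
    and norm_scaleC: "norm (scaleC c x) = cmod c * norm x"
    and star_star: "star (star x) = x"
    and star_add: "star (x + y) = star x + star y"
    and star_scaleC: "star (scaleC c x) = scaleC (cnj c) (star x)"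
    and star_mult: "star (x * y) = star y * star x"

definition is_group_inverse :: "'a::ring_1 \<Rightarrow> 'a \<Rightarrow> bool" where
  "is_group_inverse b y \<longleftrightarrow> b * y * b = b \<and> y * b * y = y \<and> b * y = y * b"

definition group_invertible :: "'a::ring_1 \<Rightarrow> bool" where
  "group_invertible b \<longleftrightarrow> (\<exists>y. is_group_inverse b y)"

definition group_inverse :: "'a::ring_1 \<Rightarrow> 'a" where
  "group_inverse b = (THE y. is_group_inverse b y)"

definition is_w_core_inverse :: "'a::banach_star_algebra \<Rightarrow> 'a \<Rightarrow> 'a \<Rightarrow> bool" where
  "is_w_core_inverse w a x \<longleftrightarrow>
     a * (w * x)^2 = x \<and> star (w * a * w * x) = w * a * w * x \<and> x * w * (a * w)^2 = a * w"

definition has_w_core_inverse :: "'a::banach_star_algebra \<Rightarrow> 'a \<Rightarrow> bool" where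
  "has_w_core_inverse w a \<longleftrightarrow> (\<exists>x. is_w_core_inverse w a x)"

end

theory Submission
  imports Defs
begin

lemma gi_unique:
  fixes b :: "'a::ring_1"
  assumes "is_group_inverse b y" "is_group_inverse b z" shows "y = z"
proof -
  have h: "b*y*b = b" "y*b*y = y" "b*y = y*b" "b*z*b = b" "z*b*z = z" "b*z = z*b"
    using assms unfolding is_group_inverse_def by auto
  have 1: "b*y = (b*z)*(b*y)" using h by (metis mult.assoc)
  have 2: "b*z = (b*y)*(b*z)" using h by (metis mult.assoc)
  have 3: "b*y = (b*y)*(b*z)" using h by (metis mult.assoc)
  have pq: "b*y = b*z" using 2 3 by simp
  have "y = (y*b)*y" using h by simp
  also have "... = (z*b)*y" using h pq by simp
  also have "... = z*(b*y)" by (simp add: mult.assoc)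
  also have "... = z*(b*z)" using pq by simp
  also have "... = z" using h by (simp add: mult.assoc)
  finally show ?thesis .
qed

lemma gi_prop:
  fixes b :: "'a::ring_1"
  assumes "group_invertible b" shows "is_group_inverse b (group_inverse b)"
  using assms gi_unique unfolding group_invertible_def group_inverse_def
  by (metis theI)

lemma gi_from:
  fixes b :: "'a::ring_1"
  assumes "b = uu*b*b" "b = b*b * vv" shows "group_invertible b"
proof -
  have p: "uu*b = b * vv" using assms by (metis mult.assoc)
  define y where "y = uu*b * vv"
  have pp: "(uu*b)*(uu*b) = uu*b" using assms p by (metis mult.assoc)
  have 1: "b*y = uu*b" unfolding y_def using assms p by (metis mult.assoc)
  have 2: "y*b = uu*b" unfolding y_def using assms p by (metis mult.assoc)
  have 3: "b*y*b = b" using 1 assms by (metis mult.assoc)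
  have 4: "y*b*y = y" unfolding y_def using 2 pp p assms by (metis mult.assoc)
  show ?thesis unfolding group_invertible_def is_group_inverse_def using 1 2 3 4 by metis
qed

theorem corollary2p5:
  fixes a w :: "'a::banach_star_algebra"
  shows "(has_w_core_inverse w a \<longleftrightarrow>
           (group_invertible (a * w) \<and>
            (\<exists>x. x * w * (a * w)^2 = a * w \<and> star (w * a * w * x) = w * a * w * x)))
       \<and> (has_w_core_inverse w a \<longleftrightarrow>
           (group_invertible (a * w) \<and>
            (\<exists>x. x * w * (a * w) = a * w * group_inverse (a * w) \<and>
                 star (w * a * w * x) = w * a * w * x)))"
proof -
  define b where "b = a*w"
  have wb: "w*a*w = w*b" unfolding b_def by (simp add: mult.assoc)
  have A: "has_w_core_inverse w a \<Longrightarrow> group_invertible b \<and>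
            (\<exists>x. x * w * b^2 = b \<and> star (w * b * x) = w * b * x)"
  proof -
    assume "has_w_core_inverse w a"
    then obtain x where x1: "a*(w*x)^2 = x" and x2: "star (w*b*x) = w*b*x"
      and x3: "x*w*b^2 = b"
      unfolding has_w_core_inverse_def is_w_core_inverse_def b_def
      by (auto simp: mult.assoc)
    have xw: "x*w = b*(x*w)*(x*w)" using x1 unfolding b_def power2_eq_square
      by (metis mult.assoc)
    have x3': "x*w*b*b = b" using x3 by (simp add: power2_eq_square mult.assoc)
    have bb: "b = b*(x*w)*b" using x3' by (metis mult.assoc xw)
    have "b = b*b*((x*w)*(x*w)*b)" using bb xw by (metis mult.assoc)
    hence "group_invertible b" using gi_from[of b "x*w"] x3' by metis
    thus ?thesis using x2 x3 by blast
  qed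
  have B: "group_invertible b \<Longrightarrow> x * w * b^2 = b \<Longrightarrow> x*w*b = b*group_inverse b" for x
  proof -
    assume g: "group_invertible b" and h: "x * w * b^2 = b"
    define g where "g = group_inverse b"
    have gg: "b*g*b = b" "g*b*g = g" "b*g = g*b" using gi_prop[OF g] unfolding g_def is_group_inverse_def by auto
    have "x*w*b = x*w*b*b*g" using gg by (metis mult.assoc)
    also have "... = b*g" using h by (simp add: power2_eq_square mult.assoc)
    finally show ?thesis unfolding g_def .
  qed
  have C: "group_invertible b \<Longrightarrow> x*w*b = b*group_inverse b \<Longrightarrow> star (w * b * x) = w * b * x
     \<Longrightarrow> has_w_core_inverse w a" for x
  proof -
    assume g: "group_invertible b" and h: "x*w*b = b*group_inverse b" and s: "star (w * b * x) = w * b * x"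
    define g where "g = group_inverse b"
    have gg: "b*g*b = b" "g*b*g = g" "b*g = g*b" using gi_prop[OF g] unfolding g_def is_group_inverse_def by auto
    have h': "x*w*b = b*g" using h g_def by simp
    define z where "z = g*b*x"
    have bgg: "b*g*g = g" using gg by (metis mult.assoc)
    have gbb: "g*b*b = b" using gg by (metis mult.assoc)
    have xwg: "x*w*g = g*g"
    proof -
      have "x*w*g = x*w*(b*g*g)" using bgg by simp
      also have "... = (x*w*b)*g*g" by (simp add: mult.assoc)
      also have "... = g*g" using h' bgg by (simp add: mult.assoc)
      finally show ?thesis .
    qed
    have e1: "a*(w*z)^2 = z"
    proof -
      have "a*(w*z)^2 = b*g*b*(x*w*g)*b*x" unfolding z_def b_def power2_eq_square by (simp add: mult.assoc)
      also have "... = b*g*g*b*x" using gg xwg by (simp add: mult.assoc)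
      also have "... = z" unfolding z_def using bgg by simp
      finally show ?thesis .
    qed
    have e2: "w*a*w*z = w*b*x" unfolding z_def wb using gg by (metis mult.assoc)
    have e3: "z*w*(a*w)^2 = b"
    proof -
      have "z*w*(a*w)^2 = g*b*(x*w*b)*b" unfolding z_def b_def power2_eq_square by (simp add: mult.assoc)
      also have "... = g*b*b*g*b" using h' by (simp add: mult.assoc)
      also have "... = b" using gbb gg by (metis mult.assoc)
      finally show ?thesis .
    qed
    show ?thesis unfolding has_w_core_inverse_def is_w_core_inverse_def
      using e1 e2 e3 s b_def by metis
  qed
  have "(has_w_core_inverse w a \<longleftrightarrow>
           (group_invertible b \<and>
            (\<exists>x. x * w * b^2 = b \<and> star (w * b * x) = w * b * x)))
       \<and> (has_w_core_inverse w a \<longleftrightarrow>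
           (group_invertible b \<and>
            (\<exists>x. x * w * b = b * group_inverse b \<and>
                 star (w * b * x) = w * b * x)))"
    using A B C by blast
  thus ?thesis unfolding wb b_def .
qed

end
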